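(* Let $K$ be a compact metric space, let $\varepsilon_1>0$ and $0<\delta<\varepsilon_1/34$, and let $(f_n)$ be a sequence in $C(K)$ (real or complex valued) with $\|f_n\|_\infty=1$. Put $A_n=\{k\in K: f_n^+(k)>\varepsilon_1-\delta\}$ and $B_n=\{k\in K:|f_n(k)|<\delta\}$. Suppose that for every $N$ and every partition $\{1,\dots,N\}=I\cup J$ into disjoint sets, $\bigcap_{n\in I}A_n\cap\bigcap_{n\in J}B_n\neq\emptyset$. Then for every $N$ and all scalars $a_1,\dots,a_N$, $$\Big\|\sum_{j=1}^N a_jf_j\Big\|_\infty\ge\frac{\varepsilon_1}{16}\sum_{j=1}^N|a_j| ,$$ i.e. $(f_n)$ is $\frac{16}{\varepsilon_1}$-equivalent to the unit vector basis of $\ell_1$.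
   Context: For real valued $f\in C(K)$, $f^+=\max(f,0)$; for complex valued $f\in C(K)$, $f^+=\min\big((\operatorname{Re}f)^+,(\operatorname{Im}f)^+\big)$. In the real case the scalars $a_j$ are real, in the complex case complex. *)

theory Defs
  imports "HOL-Analysis.Analysis"
begin

definition sup_norm :: "'k set \<Rightarrow> ('k \<Rightarrow> 'a::real_normed_vector) \<Rightarrow> real" where
  "sup_norm K g = (SUP k\<in>K. norm (g k))"

definition pos_part_real :: "real \<Rightarrow> real" where
  "pos_part_real x = max x 0"

definition pos_part_complex :: "complex \<Rightarrow> real" where
  "pos_part_complex z = min (max (Re z) 0) (max (Im z) 0)"

end

theory Submission
  imports Defs
begin


lemma sup_ge:
  fixes g :: "'k::metric_space \<Rightarrow> 'a::real_normed_vector"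
  assumes "compact K" "continuous_on K g" "k \<in> K"
  shows "norm (g k) \<le> sup_norm K g"
proof -
  have "compact (g ` K)" using assms compact_continuous_image by blast
  then have "bounded (g ` K)" by (rule compact_imp_bounded)
  then obtain B where B: "\<forall>x\<in>g ` K. norm x \<le> B" by (auto simp: bounded_iff)
  have "bdd_above ((\<lambda>k. norm (g k)) ` K)" using B by (auto intro!: bdd_aboveI)
  then show ?thesis unfolding sup_norm_def using assms(3) by (rule cSUP_upper2) auto
qed

lemma core_c:
  fixes f :: "nat \<Rightarrow> 'k \<Rightarrow> complex" and a :: "nat \<Rightarrow> complex"
  assumes "finite J" "I \<subseteq> J" "cmod c = 1" "e > 0"
    "\<forall>n\<in>I. Re (f n k) > e \<and> Im (f n k) > e"
    "\<forall>n\<in>J-I. cmod (f n k) < d"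
    "\<forall>j\<in>I. Re (c * a j) \<ge> 0 \<and> Im (c * a j) \<ge> 0"
  shows "cmod (\<Sum>j\<in>J. a j * f j k) \<ge> e * (\<Sum>j\<in>I. cmod (a j)) - d * (\<Sum>j\<in>J-I. cmod (a j))"
proof -
  have fI: "finite I" using assms(1,2) finite_subset by blast
  have A: "Im (c * (a j * f j k)) \<ge> e * cmod (a j)" if "j \<in> I" for j
  proof -
    define x where "x = Re (c * a j)"
    define y where "y = Im (c * a j)"
    define u where "u = Re (f j k)"
    define v where "v = Im (f j k)"
    have xy: "x \<ge> 0" "y \<ge> 0" using assms(7) that x_def y_def by auto
    have uv: "u > e" "v > e" using assms(5) that u_def v_def by auto
    have "cmod (c * a j) \<le> x + y" using cmod_le[of "c * a j"] xy x_def y_def by simp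
    then have ca: "cmod (a j) \<le> x + y" using assms(3) by (simp add: norm_mult)
    have "c * (a j * f j k) = (c * a j) * f j k" by (simp add: mult.assoc)
    then have "Im (c * (a j * f j k)) = x * v + y * u"
      unfolding x_def y_def u_def v_def by (simp add: algebra_simps)
    also have "\<dots> \<ge> x * e + y * e" using xy uv by (intro add_mono mult_left_mono) auto
    moreover have "e * cmod (a j) \<le> e * (x + y)" using ca assms(4) by (intro mult_left_mono) auto
    ultimately show ?thesis by (simp add: algebra_simps)
  qed
  have B: "Im (c * (a j * f j k)) \<ge> - (d * cmod (a j))" if "j \<in> J - I" for j
  proof -
    have "- Im (c * (a j * f j k)) \<le> cmod (c * (a j * f j k))" by (metis abs_Im_le_cmod abs_le_iff)
    also have "\<dots> = cmod (a j) * cmod (f j k)" using assms(3) by (simp add: norm_mult)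
    also have "\<dots> \<le> cmod (a j) * d" using assms(6) that by (intro mult_left_mono) (auto intro: less_imp_le)
    finally show ?thesis by (simp add: mult.commute)
  qed
  have "(\<Sum>j\<in>J. a j * f j k) = (\<Sum>j\<in>I. a j * f j k) + (\<Sum>j\<in>J-I. a j * f j k)"
    using assms(1,2) by (metis add.commute sum.subset_diff)
  then have "Im (c * (\<Sum>j\<in>J. a j * f j k)) = (\<Sum>j\<in>I. Im (c * (a j * f j k))) + (\<Sum>j\<in>J-I. Im (c * (a j * f j k)))"
    by (simp add: distrib_left sum_distrib_left)
  also have "\<dots> \<ge> (\<Sum>j\<in>I. e * cmod (a j)) + (\<Sum>j\<in>J-I. - (d * cmod (a j)))"
    using A B by (intro add_mono sum_mono) auto
  finally have "Im (c * (\<Sum>j\<in>J. a j * f j k)) \<ge> e * (\<Sum>j\<in>I. cmod (a j)) - d * (\<Sum>j\<in>J-I. cmod (a j))"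
    by (simp add: sum_distrib_left sum_negf)
  moreover have "Im (c * (\<Sum>j\<in>J. a j * f j k)) \<le> cmod (\<Sum>j\<in>J. a j * f j k)"
    using assms(3) by (metis abs_Im_le_cmod abs_le_iff mult_1 norm_mult)
  ultimately show ?thesis by linarith
qed

lemma core_r:
  fixes f :: "nat \<Rightarrow> 'k \<Rightarrow> real" and a :: "nat \<Rightarrow> real"
  assumes "finite J" "I \<subseteq> J" "\<bar>c\<bar> = 1" "e > 0"
    "\<forall>n\<in>I. f n k > e"
    "\<forall>n\<in>J-I. \<bar>f n k\<bar> < d"
    "\<forall>j\<in>I. c * a j \<ge> 0"
  shows "\<bar>\<Sum>j\<in>J. a j * f j k\<bar> \<ge> e * (\<Sum>j\<in>I. \<bar>a j\<bar>) - d * (\<Sum>j\<in>J-I. \<bar>a j\<bar>)"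
proof -
  have A: "c * (a j * f j k) \<ge> e * \<bar>a j\<bar>" if "j \<in> I" for j
  proof -
    have "\<bar>a j\<bar> = c * a j" using assms(3,7) that by (auto simp: abs_if split: if_splits)
    moreover have "c * a j * f j k \<ge> c * a j * e" using assms(5,7) that by (intro mult_left_mono) auto
    ultimately show ?thesis by (simp add: mult.assoc mult.commute mult.left_commute)
  qed
  have B: "c * (a j * f j k) \<ge> - (d * \<bar>a j\<bar>)" if "j \<in> J - I" for j
  proof -
    have "\<bar>c * (a j * f j k)\<bar> = \<bar>a j\<bar> * \<bar>f j k\<bar>" using assms(3) by (simp add: abs_mult)
    also have "\<dots> \<le> \<bar>a j\<bar> * d" using assms(6) that by (intro mult_left_mono) (auto intro: less_imp_le)
    finally show ?thesis by (simp add: mult.commute abs_le_iff)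
  qed
  have "(\<Sum>j\<in>J. a j * f j k) = (\<Sum>j\<in>I. a j * f j k) + (\<Sum>j\<in>J-I. a j * f j k)"
    using assms(1,2) by (metis add.commute sum.subset_diff)
  then have "c * (\<Sum>j\<in>J. a j * f j k) = (\<Sum>j\<in>I. c * (a j * f j k)) + (\<Sum>j\<in>J-I. c * (a j * f j k))"
    by (simp add: distrib_left sum_distrib_left)
  also have "\<dots> \<ge> (\<Sum>j\<in>I. e * \<bar>a j\<bar>) + (\<Sum>j\<in>J-I. - (d * \<bar>a j\<bar>))"
    using A B by (intro add_mono sum_mono) auto
  finally have "c * (\<Sum>j\<in>J. a j * f j k) \<ge> e * (\<Sum>j\<in>I. \<bar>a j\<bar>) - d * (\<Sum>j\<in>J-I. \<bar>a j\<bar>)"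
    by (simp add: sum_distrib_left sum_negf)
  moreover have "c * (\<Sum>j\<in>J. a j * f j k) \<le> \<bar>\<Sum>j\<in>J. a j * f j k\<bar>"
    using assms(3) by (metis abs_ge_self abs_mult mult_1)
  ultimately show ?thesis by linarith
qed



theorem mainTheorem12:
  fixes K :: "'k::metric_space set" and eps1 delta :: real
  assumes "compact K" and "0 < eps1" and "0 < delta" and "delta < eps1 / 34"
  shows
   "(\<forall>f :: nat \<Rightarrow> 'k \<Rightarrow> real.
       (\<forall>n\<ge>1. continuous_on K (f n) \<and> sup_norm K (f n) = 1) \<and>
       (\<forall>N I. I \<subseteq> {1..N} \<longrightarrow>
          (\<exists>k\<in>K. (\<forall>n\<in>I. pos_part_real (f n k) > eps1 - delta) \<and>
                 (\<forall>n\<in>{1..N} - I. \<bar>f n k\<bar> < delta)))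
       \<longrightarrow> (\<forall>N (a :: nat \<Rightarrow> real).
              sup_norm K (\<lambda>k. \<Sum>j=1..N. a j * f j k) \<ge> eps1 / 16 * (\<Sum>j=1..N. \<bar>a j\<bar>)))
    \<and>
    (\<forall>f :: nat \<Rightarrow> 'k \<Rightarrow> complex.
       (\<forall>n\<ge>1. continuous_on K (f n) \<and> sup_norm K (f n) = 1) \<and>
       (\<forall>N I. I \<subseteq> {1..N} \<longrightarrow>
          (\<exists>k\<in>K. (\<forall>n\<in>I. pos_part_complex (f n k) > eps1 - delta) \<and>
                 (\<forall>n\<in>{1..N} - I. cmod (f n k) < delta)))
       \<longrightarrow> (\<forall>N (a :: nat \<Rightarrow> complex).
              sup_norm K (\<lambda>k. \<Sum>j=1..N. a j * f j k) \<ge> eps1 / 16 * (\<Sum>j=1..N. cmod (a j))))"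
  
proof (intro conjI allI impI)
  have e0: "eps1 - delta > 0" using assms by linarith
  fix f :: "nat \<Rightarrow> 'k \<Rightarrow> real" and N and a :: "nat \<Rightarrow> real"
  assume H: "(\<forall>n\<ge>1. continuous_on K (f n) \<and> sup_norm K (f n) = 1) \<and>
       (\<forall>N I. I \<subseteq> {1..N} \<longrightarrow>
          (\<exists>k\<in>K. (\<forall>n\<in>I. pos_part_real (f n k) > eps1 - delta) \<and>
                 (\<forall>n\<in>{1..N} - I. \<bar>f n k\<bar> < delta)))"
  define J :: "nat set" where "J = {1..N}"
  define S where "S = (\<Sum>j\<in>J. \<bar>a j\<bar>)"
  have S0: "S \<ge> 0" unfolding S_def by (intro sum_nonneg) auto
  have cont: "continuous_on K (\<lambda>k. \<Sum>j=1..N. a j * f j k)"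
    using H by (intro continuous_intros) auto
  have key: "sup_norm K (\<lambda>k. \<Sum>j=1..N. a j * f j k) \<ge> eps1 / 16 * S"
    if I: "I \<subseteq> J" "\<bar>c\<bar> = 1" "\<forall>j\<in>I. c * a j \<ge> 0" "(\<Sum>j\<in>I. \<bar>a j\<bar>) \<ge> S / 2" for I c
  proof -
    obtain k where k: "k \<in> K" "\<forall>n\<in>I. pos_part_real (f n k) > eps1 - delta"
        "\<forall>n\<in>J - I. \<bar>f n k\<bar> < delta"
      using H I(1) unfolding J_def by blast
    have k2: "\<forall>n\<in>I. f n k > eps1 - delta" using k(2) e0 by (auto simp: pos_part_real_def)
    have "\<bar>\<Sum>j\<in>J. a j * f j k\<bar> \<ge> (eps1 - delta) * (\<Sum>j\<in>I. \<bar>a j\<bar>) - delta * (\<Sum>j\<in>J-I. \<bar>a j\<bar>)"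
      using core_r[of J I c "eps1 - delta" f k delta a] I k k2 e0 unfolding J_def by auto
    moreover have "(\<Sum>j\<in>J-I. \<bar>a j\<bar>) = S - (\<Sum>j\<in>I. \<bar>a j\<bar>)"
      unfolding S_def using I(1) by (simp add: sum_diff J_def)
    moreover have "eps1 * (\<Sum>j\<in>I. \<bar>a j\<bar>) \<ge> eps1 * (S / 2)" using I(4) assms by (intro mult_left_mono) auto
    moreover have "delta * S \<le> eps1 / 34 * S" using S0 assms by (intro mult_right_mono) auto
    moreover have "\<bar>\<Sum>j\<in>J. a j * f j k\<bar> \<le> sup_norm K (\<lambda>k. \<Sum>j=1..N. a j * f j k)"
      using sup_ge[OF assms(1) cont k(1)] unfolding J_def by simp
    ultimately show ?thesis
    proof -
      let ?A = "\<bar>\<Sum>j\<in>J. a j * f j k\<bar>"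
      let ?B = "sup_norm K (\<lambda>k. \<Sum>j=1..N. a j * f j k)"
      assume h1: "?A \<ge> (eps1 - delta) * (\<Sum>j\<in>I. \<bar>a j\<bar>) - delta * (\<Sum>j\<in>J-I. \<bar>a j\<bar>)"
        and h2: "(\<Sum>j\<in>J-I. \<bar>a j\<bar>) = S - (\<Sum>j\<in>I. \<bar>a j\<bar>)"
        and h3: "eps1 * (\<Sum>j\<in>I. \<bar>a j\<bar>) \<ge> eps1 * (S / 2)"
        and h4: "delta * S \<le> eps1 / 34 * S" and h5: "?A \<le> ?B"
      have h1': "?A \<ge> eps1 * (\<Sum>j\<in>I. \<bar>a j\<bar>) - delta * (\<Sum>j\<in>I. \<bar>a j\<bar>) - (delta * S - delta * (\<Sum>j\<in>I. \<bar>a j\<bar>))"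
        using h1 unfolding h2 by (simp add: left_diff_distrib right_diff_distrib)
      have "eps1 * (S / 2) = eps1 * S / 2" "eps1 / 34 * S = eps1 * S / 34" "eps1 / 16 * S = eps1 * S / 16" by simp_all
      moreover have "eps1 * S \<ge> 0" using S0 assms by simp
      ultimately show ?thesis using h1' h3 h4 h5 by linarith
    qed
  qed
  define I1 where "I1 = {j\<in>J. 1 * a j \<ge> 0}"
  define I2 where "I2 = {j\<in>J. -1 * a j \<ge> 0}"
  have fJ: "finite J" unfolding J_def by simp
  have "S \<le> (\<Sum>j\<in>J. (if 1 * a j \<ge> 0 then \<bar>a j\<bar> else 0) + (if -1 * a j \<ge> 0 then \<bar>a j\<bar> else 0))"
    unfolding S_def by (intro sum_mono) auto
  also have "\<dots> = (\<Sum>j\<in>I1. \<bar>a j\<bar>) + (\<Sum>j\<in>I2. \<bar>a j\<bar>)"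
    unfolding I1_def I2_def by (simp only: sum.distrib sum.inter_filter[OF fJ])
  finally have "(\<Sum>j\<in>I1. \<bar>a j\<bar>) \<ge> S / 2 \<or> (\<Sum>j\<in>I2. \<bar>a j\<bar>) \<ge> S / 2" by linarith
  then show "sup_norm K (\<lambda>k. \<Sum>j=1..N. a j * f j k) \<ge> eps1 / 16 * (\<Sum>j=1..N. \<bar>a j\<bar>)"
  proof
    assume h: "(\<Sum>j\<in>I1. \<bar>a j\<bar>) \<ge> S / 2"
    have "eps1 / 16 * S \<le> sup_norm K (\<lambda>k. \<Sum>j=1..N. a j * f j k)"
      by (rule key[of I1 1, OF _ _ _ h]) (auto simp: I1_def)
    then show ?thesis by (simp add: S_def J_def)
  next
    assume h: "(\<Sum>j\<in>I2. \<bar>a j\<bar>) \<ge> S / 2"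
    have "eps1 / 16 * S \<le> sup_norm K (\<lambda>k. \<Sum>j=1..N. a j * f j k)"
      by (rule key[of I2 "-1", OF _ _ _ h]) (auto simp: I2_def)
    then show ?thesis by (simp add: S_def J_def)
  qed
next
  have e0: "eps1 - delta > 0" using assms by linarith
  fix f :: "nat \<Rightarrow> 'k \<Rightarrow> complex" and N and a :: "nat \<Rightarrow> complex"
  assume H: "(\<forall>n\<ge>1. continuous_on K (f n) \<and> sup_norm K (f n) = 1) \<and>
       (\<forall>N I. I \<subseteq> {1..N} \<longrightarrow>
          (\<exists>k\<in>K. (\<forall>n\<in>I. pos_part_complex (f n k) > eps1 - delta) \<and>
                 (\<forall>n\<in>{1..N} - I. cmod (f n k) < delta)))"
  define J :: "nat set" where "J = {1..N}"
  define S where "S = (\<Sum>j\<in>J. cmod (a j))"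
  have S0: "S \<ge> 0" unfolding S_def by (intro sum_nonneg) auto
  have cont: "continuous_on K (\<lambda>k. \<Sum>j=1..N. a j * f j k)"
    using H by (intro continuous_intros) auto
  have key: "sup_norm K (\<lambda>k. \<Sum>j=1..N. a j * f j k) \<ge> eps1 / 16 * S"
    if I: "I \<subseteq> J" "cmod c = 1" "\<forall>j\<in>I. Re (c * a j) \<ge> 0 \<and> Im (c * a j) \<ge> 0"
      "(\<Sum>j\<in>I. cmod (a j)) \<ge> S / 4" for I c
  proof -
    obtain k where k: "k \<in> K" "\<forall>n\<in>I. pos_part_complex (f n k) > eps1 - delta"
        "\<forall>n\<in>J - I. cmod (f n k) < delta"
      using H I(1) unfolding J_def by blast
    have k2: "\<forall>n\<in>I. Re (f n k) > eps1 - delta \<and> Im (f n k) > eps1 - delta"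
      using k(2) e0 by (auto simp: pos_part_complex_def)
    have "cmod (\<Sum>j\<in>J. a j * f j k) \<ge> (eps1 - delta) * (\<Sum>j\<in>I. cmod (a j)) - delta * (\<Sum>j\<in>J-I. cmod (a j))"
      using core_c[of J I c "eps1 - delta" f k delta a] I k k2 e0 unfolding J_def by auto
    moreover have "(\<Sum>j\<in>J-I. cmod (a j)) = S - (\<Sum>j\<in>I. cmod (a j))"
      unfolding S_def using I(1) by (simp add: sum_diff J_def)
    moreover have "eps1 * (\<Sum>j\<in>I. cmod (a j)) \<ge> eps1 * (S / 4)" using I(4) assms by (intro mult_left_mono) auto
    moreover have "delta * S \<le> eps1 / 34 * S" using S0 assms by (intro mult_right_mono) auto
    moreover have "cmod (\<Sum>j\<in>J. a j * f j k) \<le> sup_norm K (\<lambda>k. \<Sum>j=1..N. a j * f j k)"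
      using sup_ge[OF assms(1) cont k(1)] unfolding J_def by simp
    ultimately show ?thesis
    proof -
      let ?A = "cmod (\<Sum>j\<in>J. a j * f j k)"
      let ?B = "sup_norm K (\<lambda>k. \<Sum>j=1..N. a j * f j k)"
      assume h1: "?A \<ge> (eps1 - delta) * (\<Sum>j\<in>I. cmod (a j)) - delta * (\<Sum>j\<in>J-I. cmod (a j))"
        and h2: "(\<Sum>j\<in>J-I. cmod (a j)) = S - (\<Sum>j\<in>I. cmod (a j))"
        and h3: "eps1 * (\<Sum>j\<in>I. cmod (a j)) \<ge> eps1 * (S / 4)"
        and h4: "delta * S \<le> eps1 / 34 * S" and h5: "?A \<le> ?B"
      have h1': "?A \<ge> eps1 * (\<Sum>j\<in>I. cmod (a j)) - delta * (\<Sum>j\<in>I. cmod (a j)) - (delta * S - delta * (\<Sum>j\<in>I. cmod (a j)))"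
        using h1 unfolding h2 by (simp add: left_diff_distrib right_diff_distrib)
      have "eps1 * (S / 4) = eps1 * S / 4" "eps1 / 34 * S = eps1 * S / 34" "eps1 / 16 * S = eps1 * S / 16" by simp_all
      moreover have "eps1 * S \<ge> 0" using S0 assms by simp
      ultimately show ?thesis using h1' h3 h4 h5 by linarith
    qed
  qed
  define P where "P = (\<lambda>c j. Re (c * a j) \<ge> 0 \<and> Im (c * a j) \<ge> 0)"
  define I0 where "I0 = {j\<in>J. P 1 j}"
  define I1 where "I1 = {j\<in>J. P (- \<i>) j}"
  define I2 where "I2 = {j\<in>J. P (- 1) j}"
  define I3 where "I3 = {j\<in>J. P \<i> j}"
  have fJ: "finite J" unfolding J_def by simp
  have pt: "cmod (a j) \<le> (if P 1 j then cmod (a j) else 0) + (if P (- \<i>) j then cmod (a j) else 0)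
      + (if P (- 1) j then cmod (a j) else 0) + (if P \<i> j then cmod (a j) else 0)" for j
    unfolding P_def by auto
  have "S \<le> (\<Sum>j\<in>J. (if P 1 j then cmod (a j) else 0) + (if P (- \<i>) j then cmod (a j) else 0)
      + (if P (- 1) j then cmod (a j) else 0) + (if P \<i> j then cmod (a j) else 0))"
    unfolding S_def by (intro sum_mono pt)
  also have "\<dots> = (\<Sum>j\<in>I0. cmod (a j)) + (\<Sum>j\<in>I1. cmod (a j)) + (\<Sum>j\<in>I2. cmod (a j)) + (\<Sum>j\<in>I3. cmod (a j))"
    unfolding I0_def I1_def I2_def I3_def by (simp only: sum.distrib sum.inter_filter[OF fJ])
  finally have "(\<Sum>j\<in>I0. cmod (a j)) \<ge> S / 4 \<or> (\<Sum>j\<in>I1. cmod (a j)) \<ge> S / 4 \<or>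
     (\<Sum>j\<in>I2. cmod (a j)) \<ge> S / 4 \<or> (\<Sum>j\<in>I3. cmod (a j)) \<ge> S / 4" by linarith
  then have "sup_norm K (\<lambda>k. \<Sum>j=1..N. a j * f j k) \<ge> eps1 / 16 * S"
  proof (elim disjE)
    assume h: "(\<Sum>j\<in>I0. cmod (a j)) \<ge> S / 4"
    have "eps1 / 16 * S \<le> sup_norm K (\<lambda>k. \<Sum>j=1..N. a j * f j k)"
      by (rule key[of I0 1, OF _ _ _ h]) (auto simp: I0_def P_def)
    then show ?thesis by (simp add: S_def J_def)
  next
    assume h: "(\<Sum>j\<in>I1. cmod (a j)) \<ge> S / 4"
    have "eps1 / 16 * S \<le> sup_norm K (\<lambda>k. \<Sum>j=1..N. a j * f j k)"
      by (rule key[of I1 "- \<i>", OF _ _ _ h]) (auto simp: I1_def P_def)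
    then show ?thesis by (simp add: S_def J_def)
  next
    assume h: "(\<Sum>j\<in>I2. cmod (a j)) \<ge> S / 4"
    have "eps1 / 16 * S \<le> sup_norm K (\<lambda>k. \<Sum>j=1..N. a j * f j k)"
      by (rule key[of I2 "- 1", OF _ _ _ h]) (auto simp: I2_def P_def)
    then show ?thesis by (simp add: S_def J_def)
  next
    assume h: "(\<Sum>j\<in>I3. cmod (a j)) \<ge> S / 4"
    have "eps1 / 16 * S \<le> sup_norm K (\<lambda>k. \<Sum>j=1..N. a j * f j k)"
      by (rule key[of I3 \<i>, OF _ _ _ h]) (auto simp: I3_def P_def)
    then show ?thesis by (simp add: S_def J_def)
  qed
  then show "sup_norm K (\<lambda>k. \<Sum>j=1..N. a j * f j k) \<ge> eps1 / 16 * (\<Sum>j=1..N. cmod (a j))"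
    unfolding S_def J_def by simp
qed

end
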